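(* Let $p>3$ be a prime, let $a$ be a positive integer with $\gcd(a,p)=1$, and let $r\ge0$, $m\ge1$ be integers. Let $b_{2,r,a,m}(n)$ be the number of partitions of $n$ in which every multiplicity has the form $j(pr+a)+pk$ with $j\in\{0,1\}$ and $0\le k\le m-1$. Let $t$ be an integer such that $24ta^{-1}+1$ is a quadratic nonresidue modulo $p$, where $a^{-1}$ is the inverse of $a$ modulo $p$. Then $b_{2,r,a,m}(pn+t)\equiv 0\pmod 2$ for all $n\ge0$.
   Context: Multiplicity of a part means the number of times it appears in the partition. Equivalently, $\sum_{n\ge0}b_{2,r,a,m}(n)q^n=\prod_{n\ge1}\frac{(1-q^{2(pr+a)n})(1-q^{pmn})}{(1-q^{(pr+a)n})(1-q^{pn})}$. *)

theory Defs
  imports "HOL-Number_Theory.Number_Theory"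
begin

definition allowed_mult :: "nat \<Rightarrow> nat \<Rightarrow> nat \<Rightarrow> nat \<Rightarrow> nat set" where
  "allowed_mult p r a m = {j * (p * r + a) + p * k | j k. j \<in> {0, 1} \<and> k < m}"

text \<open>A partition of n is encoded by its multiplicity function f (f i = number of times
  the part i occurs), with no part 0, no part larger than n, and total size n.\<close>
definition partitions_mult :: "nat \<Rightarrow> (nat \<Rightarrow> nat) set" where
  "partitions_mult n = {f. f 0 = 0 \<and> (\<forall>i>n. f i = 0) \<and> (\<Sum>i\<in>{1..n}. i * f i) = n}"

definition b2 :: "nat \<Rightarrow> nat \<Rightarrow> nat \<Rightarrow> nat \<Rightarrow> nat \<Rightarrow> nat" where
  "b2 p r a m n = card {f \<in> partitions_mult n. \<forall>i \<in> {1..n}. f i > 0 \<longrightarrow> f i \<in> allowed_mult p r a m}"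

end

theory Submission
  imports Defs
begin

lemma invol_even:
  assumes "finite X" "\<forall>x\<in>X. g x \<in> X \<and> g (g x) = x" "\<forall>x\<in>X. g x \<noteq> x"
  shows "even (card X)"
  using assms
proof (induction "card X" arbitrary: X rule: less_induct)
  case less
  show ?case
  proof (cases "X = {}")
    case True then show ?thesis by simp
  next
    case False
    then obtain x where x: "x \<in> X" by blast
    let ?Y = "X - {x, g x}"
    have gx: "g x \<in> X" "g x \<noteq> x" using less.prems x by auto
    have cY: "card ?Y = card X - 2" using less.prems(1) x gx by (simp add: card_Diff_subset)
    have cX: "card X \<ge> 2"
    proof -
      have "{x, g x} \<subseteq> X" using x gx by auto
      then have "card {x, g x} \<le> card X" using less.prems(1) card_mono by blast
      then show ?thesis using gx by simp
    qed
    have "even (card ?Y)"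
    proof (rule less.hyps)
      show "card ?Y < card X" using cY cX by simp
      show "finite ?Y" using less.prems(1) by simp
      show "\<forall>y\<in>?Y. g y \<in> ?Y \<and> g (g y) = y"
      proof
        fix y assume y: "y \<in> ?Y"
        then have y1: "g y \<in> X" "g (g y) = y" "y \<in> X" "y \<noteq> x" "y \<noteq> g x" using less.prems(2) by auto
        have "g y \<noteq> x" using y1 less.prems(2) x by metis
        moreover have "g y \<noteq> g x" using y1 less.prems(2) x by metis
        ultimately show "g y \<in> ?Y \<and> g (g y) = y" using y1 by auto
      qed
      show "\<forall>y\<in>?Y. g y \<noteq> y" using less.prems(3) by auto
    qed
    then show ?thesis using cY cX by (simp add: even_diff_nat)
  qed
qed

lemma sum_interval2: "2 * (\<Sum>i\<in>{c..<c+l}. i) + l = l * (2*c + l :: nat)"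
  by (induction l) (auto simp: algebra_simps)

definition runb :: "nat set \<Rightarrow> nat" where
  "runb D = (LEAST x. {x..Max D} \<subseteq> D)"

definition fr :: "nat set \<Rightarrow> nat set" where
  "fr D = (if D = {} then {} else
     (let sm = Min D; M = Max D; b = runb D in
      if b + sm \<le> M + 1 then (if M + 1 = 2 * sm then D else insert (M+1) (D - {sm, M+1-sm}))
      else (if M + 2 = 2 * b then D else insert (M+1-b) (insert (b-1) (D - {M})))))"

lemma runb_props:
  assumes "finite D" "D \<noteq> {}" "0 \<notin> D"
  shows "runb D \<le> Max D" "{runb D..Max D} \<subseteq> D" "Min D \<le> runb D" "runb D - 1 \<notin> D" "runb D \<ge> 1"
proof -
  have ex: "{Max D..Max D} \<subseteq> D" using assms Max_in by auto
  show le: "runb D \<le> Max D" unfolding runb_def using ex by (rule Least_le)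
  show sub: "{runb D..Max D} \<subseteq> D" unfolding runb_def using ex by (rule LeastI)
  have "runb D \<in> D" using le sub by auto
  then show "Min D \<le> runb D" using assms by simp
  then show ge1: "runb D \<ge> 1" using \<open>runb D \<in> D\<close> assms by (cases "runb D") auto
  show "runb D - 1 \<notin> D"
  proof
    assume "runb D - 1 \<in> D"
    have "{runb D - 1..Max D} \<subseteq> D"
    proof
      fix y assume "y \<in> {runb D - 1..Max D}"
      then have "y = runb D - 1 \<or> y \<in> {runb D..Max D}" by auto
      then show "y \<in> D" using sub \<open>runb D - 1 \<in> D\<close> by blast
    qed
    then have "runb D \<le> runb D - 1" unfolding runb_def by (rule Least_le)
    then show False using ge1 by simp
  qed
qed

lemma runb_eq:
  assumes "finite D" "0 \<notin> D" "c \<le> Max D" "{c..Max D} \<subseteq> D" "c - 1 \<notin> D" "c \<ge> 1"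
  shows "runb D = c"
proof -
  have D: "D \<noteq> {}" using assms(3,4) by auto
  have "runb D \<le> c" unfolding runb_def using assms(4) by (rule Least_le)
  moreover have "\<not> runb D < c"
  proof
    assume "runb D < c"
    then have "c - 1 \<in> {runb D..Max D}" using assms by auto
    then show False using runb_props(2)[OF assms(1) D assms(2)] assms(5) by blast
  qed
  ultimately show ?thesis by simp
qed

lemma fr_A:
  assumes fin: "finite D" and ne: "D \<noteq> {}" and z: "0 \<notin> D"
    and c1: "runb D + Min D \<le> Max D + 1" and c2: "Max D + 1 \<noteq> 2 * Min D"
  shows "fr D = insert (Max D + 1) (D - {Min D, Max D + 1 - Min D})"
    "finite (fr D)" "0 \<notin> fr D" "sum id (fr D) = sum id D" "fr (fr D) = D"
proof -
  define sm where "sm = Min D"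
  define M where "M = Max D"
  define b where "b = runb D"
  define x where "x = M + 1 - sm"
  note rp = runb_props[OF fin ne z, folded b_def M_def sm_def]
  have smD: "sm \<in> D" unfolding sm_def using fin ne by simp
  have MD: "M \<in> D" unfolding M_def using fin ne by simp
  have sm1: "sm \<ge> 1" using smD z by (cases sm) auto
  have smM: "sm \<le> M" unfolding sm_def M_def using fin ne by simp
  have lowD: "\<And>y. y \<in> D \<Longrightarrow> sm \<le> y \<and> y \<le> M" unfolding sm_def M_def using fin by simp
  have c1': "b + sm \<le> M + 1" and c2': "M + 1 \<noteq> 2 * sm" using c1 c2 unfolding b_def sm_def M_def .
  have xb: "b \<le> x" "x \<le> M" using c1' sm1 unfolding x_def by auto
  have xD: "x \<in> D" using rp(2) xb by auto
  have xsm: "sm < x" using xb rp(3) c2' unfolding x_def by auto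
  have M1: "M + 1 \<notin> D" using lowD by fastforce
  show frD: "fr D = insert (Max D + 1) (D - {Min D, Max D + 1 - Min D})"
    unfolding fr_def Let_def using ne c1 c2 by simp
  define D' where "D' = insert (M+1) (D - {sm, x})"
  have frD': "fr D = D'" unfolding frD D'_def x_def sm_def M_def ..
  show "finite (fr D)" using fin frD' D'_def by simp
  show "0 \<notin> fr D" using z frD' D'_def by simp
  have "sum id D' = (M + 1) + sum id (D - {sm, x})" unfolding D'_def using fin M1 by simp
  also have "sum id (D - {sm, x}) + (sm + x) = sum id D"
  proof -
    have "sum id D = sum id (D - {sm, x}) + sum id {sm, x}"
      using fin smD xD by (metis add.commute empty_subsetI insert_subset sum.subset_diff finite.emptyI finite_insert)
    then show ?thesis using xsm by simp
  qed
  moreover have "sm + x = M + 1" using smM unfolding x_def by simp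
  ultimately show "sum id (fr D) = sum id D" using frD' by simp
  have fin': "finite D'" "D' \<noteq> {}" "0 \<notin> D'" using fin z unfolding D'_def by auto
  have MaxD': "Max D' = M + 1"
    by (rule Max_eqI) (use fin' in \<open>auto simp: D'_def dest: lowD\<close>)
  have low': "\<And>y. y \<in> D' \<Longrightarrow> sm < y" using lowD xsm smM unfolding D'_def by force
  have MinD': "Min D' > sm" using low' fin' by simp
  have runb': "runb D' = x + 1"
  proof (rule runb_eq[OF fin'(1) fin'(3)])
    show "x + 1 \<le> Max D'" using MaxD' xb by simp
    show "{x + 1..Max D'} \<subseteq> D'" using MaxD' rp(2) xb xsm unfolding D'_def by auto
    show "x + 1 - 1 \<notin> D'" unfolding D'_def using xb by auto
  qed simp
  have "\<not> runb D' + Min D' \<le> Max D' + 1" using runb' MaxD' MinD' xb sm1 unfolding x_def by simp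
  moreover have "Max D' + 2 \<noteq> 2 * runb D'" using runb' MaxD' c2' xb sm1 unfolding x_def by simp
  ultimately have "fr D' = insert (Max D' + 1 - runb D') (insert (runb D' - 1) (D' - {Max D'}))"
    unfolding fr_def Let_def using fin'(2) by simp
  also have "\<dots> = insert sm (insert x (D' - {M+1}))"
  proof -
    have "M + 1 + 1 - (x + 1) = sm" using smM unfolding x_def by simp
    then show ?thesis using runb' MaxD' by simp
  qed
  also have "\<dots> = D" unfolding D'_def using M1 smD xD by auto
  finally show "fr (fr D) = D" using frD' by simp
qed

lemma fr_B:
  assumes fin: "finite D" and ne: "D \<noteq> {}" and z: "0 \<notin> D"
    and c1: "\<not> runb D + Min D \<le> Max D + 1" and c2: "Max D + 2 \<noteq> 2 * runb D"
  shows "fr D = insert (Max D + 1 - runb D) (insert (runb D - 1) (D - {Max D}))"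
    "finite (fr D)" "0 \<notin> fr D" "sum id (fr D) = sum id D" "fr (fr D) = D"
proof -
  define sm where "sm = Min D"
  define M where "M = Max D"
  define b where "b = runb D"
  define e where "e = b - 1"
  define \<sigma> where "\<sigma> = M + 1 - b"
  note rp = runb_props[OF fin ne z, folded b_def M_def sm_def]
  have smD: "sm \<in> D" unfolding sm_def using fin ne by simp
  have MD: "M \<in> D" unfolding M_def using fin ne by simp
  have lowD: "\<And>y. y \<in> D \<Longrightarrow> sm \<le> y \<and> y \<le> M" unfolding sm_def M_def using fin by simp
  have c1': "M + 1 < b + sm" and c2': "M + 2 \<noteq> 2 * b" using c1 c2 unfolding b_def sm_def M_def by auto
  have s1: "\<sigma> \<ge> 1" "\<sigma> < sm" using rp c1' unfolding \<sigma>_def by auto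
  have b2: "b \<ge> 2" using s1 rp(3) by simp
  have eD: "e \<notin> D" using rp(4) unfolding e_def by simp
  have sD: "\<sigma> \<notin> D" using s1 lowD by force
  have se: "\<sigma> < e" using s1 rp c2' unfolding \<sigma>_def e_def by auto
  have eM: "e < M" using rp b2 unfolding e_def by simp
  have sum_es: "e + \<sigma> = M" using rp b2 unfolding e_def \<sigma>_def by simp
  show frD: "fr D = insert (Max D + 1 - runb D) (insert (runb D - 1) (D - {Max D}))"
    unfolding fr_def Let_def using ne c1 c2 by simp
  define D' where "D' = insert \<sigma> (insert e (D - {M}))"
  have frD': "fr D = D'" unfolding frD D'_def e_def \<sigma>_def b_def M_def ..
  show "finite (fr D)" using fin frD' D'_def by simp
  have fin': "finite D'" "D' \<noteq> {}" "0 \<notin> D'" using fin z s1 se unfolding D'_def by auto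
  show "0 \<notin> fr D" using fin' frD' by simp
  have "sum id D' = \<sigma> + e + sum id (D - {M})" unfolding D'_def using fin sD eD se by simp
  moreover have "sum id (D - {M}) + M = sum id D"
    using fin MD by (metis add.commute sum.remove id_apply)
  ultimately show "sum id (fr D) = sum id D" using frD' sum_es by simp
  have MaxD': "Max D' = M - 1"
  proof (rule Max_eqI)
    show "finite D'" by fact
    show "y \<le> M - 1" if "y \<in> D'" for y
    proof -
      have "y = \<sigma> \<or> y = e \<or> (y \<in> D \<and> y \<noteq> M)" using that unfolding D'_def by auto
      then show ?thesis using se eM lowD[of y] by auto
    qed
    show "M - 1 \<in> D'"
    proof (cases "b \<le> M - 1")
      case True then have "M - 1 \<in> D" using rp(2) by auto
      then show ?thesis unfolding D'_def using eM by auto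
    next
      case False then have "e = M - 1" using rp unfolding e_def by simp
      then show ?thesis unfolding D'_def by simp
    qed
  qed
  have MinD': "Min D' = \<sigma>"
  proof (rule Min_eqI)
    show "finite D'" by fact
    show "\<sigma> \<le> y" if "y \<in> D'" for y
    proof -
      have "y = \<sigma> \<or> y = e \<or> y \<in> D" using that unfolding D'_def by auto
      then show ?thesis using se s1 lowD[of y] by auto
    qed
  qed (simp add: D'_def)
  have "runb D' \<le> e" unfolding runb_def
  proof (rule Least_le)
    show "{e..Max D'} \<subseteq> D'"
    proof
      fix y assume "y \<in> {e..Max D'}"
      then have "y = e \<or> (b \<le> y \<and> y \<le> M - 1)" using MaxD' unfolding e_def by auto
      then show "y \<in> D'" using rp(2) eM unfolding D'_def by auto
    qed
  qed
  then have "runb D' + Min D' \<le> Max D' + 1" using MinD' MaxD' sum_es eM by simp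
  moreover have "Max D' + 1 \<noteq> 2 * Min D'" using MinD' MaxD' c2' rp b2 unfolding \<sigma>_def by auto
  ultimately have "fr D' = insert (Max D' + 1) (D' - {Min D', Max D' + 1 - Min D'})"
    unfolding fr_def Let_def using fin'(2) by simp
  also have "\<dots> = insert M (D' - {\<sigma>, e})"
  proof -
    have "M - \<sigma> = e" using sum_es by simp
    then show ?thesis using MinD' MaxD' eM by simp
  qed
  also have "\<dots> = D" unfolding D'_def using MD sD eD se by auto
  finally show "fr (fr D) = D" using frD' by simp
qed

lemma fr_props:
  assumes "finite D" "0 \<notin> D"
  shows "finite (fr D) \<and> 0 \<notin> fr D \<and> sum id (fr D) = sum id D \<and> fr (fr D) = D"
proof (cases "D = {}")
  case True then show ?thesis by (simp add: fr_def)
next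
  case ne: False
  show ?thesis
  proof (cases "runb D + Min D \<le> Max D + 1")
    case c1: True
    show ?thesis
    proof (cases "Max D + 1 = 2 * Min D")
      case True then have "fr D = D" unfolding fr_def Let_def using ne c1 by simp
      then show ?thesis using assms by simp
    next
      case False then show ?thesis using fr_A[OF assms(1) ne assms(2) c1] by blast
    qed
  next
    case c1: False
    show ?thesis
    proof (cases "Max D + 2 = 2 * runb D")
      case True then have "fr D = D" unfolding fr_def Let_def using ne c1 by simp
      then show ?thesis using assms by simp
    next
      case False then show ?thesis using fr_B[OF assms(1) ne assms(2) c1] by blast
    qed
  qed
qed

lemma fr_fix:
  assumes fin: "finite D" and z: "0 \<notin> D" and fx: "fr D = D"
  shows "\<exists>y::int. 24 * int (sum id D) + 1 = y^2"
proof (cases "D = {}")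
  case True then show ?thesis by (intro exI[of _ 1]) simp
next
  case ne: False
  define sm where "sm = Min D"
  define M where "M = Max D"
  define b where "b = runb D"
  note rp = runb_props[OF fin ne z, folded b_def M_def sm_def]
  have smD: "sm \<in> D" unfolding sm_def using fin ne by simp
  have MD: "M \<in> D" unfolding M_def using fin ne by simp
  have lowD: "\<And>y. y \<in> D \<Longrightarrow> sm \<le> y \<and> y \<le> M" unfolding sm_def M_def using fin by simp
  show ?thesis
  proof (cases "runb D + Min D \<le> Max D + 1")
    case c1: True
    show ?thesis
    proof (cases "Max D + 1 = 2 * Min D")
      case c2: True
      have "b = sm" using c1 c2 rp(3) unfolding b_def sm_def M_def by simp
      have D1: "D = {sm..M}" using rp(2) lowD \<open>b = sm\<close> by auto
      have "{sm..M} = {sm..<sm+sm}" using c2 unfolding M_def sm_def by auto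
      then have DI: "D = {sm..<sm+sm}" using D1 by simp
      have "2 * sum id D + sm = sm * (3 * sm)" using sum_interval2[of sm sm] DI by simp
      then have "int (2 * sum id D + sm) = int (sm * (3 * sm))" by (rule arg_cong)
      then have h: "2 * int (sum id D) + int sm = int sm * (3 * int sm)" by (simp only: of_nat_add of_nat_mult of_nat_numeral)
      have e1: "(6 * int sm - 1)^2 = 36 * (int sm * int sm) - 12 * int sm + 1" by (simp add: power2_eq_square algebra_simps)
      have e2: "int sm * (3 * int sm) = 3 * (int sm * int sm)" by simp
      have "24 * int (sum id D) + 1 = (6 * int sm - 1)^2" using h e1 e2 by linarith
      then show ?thesis by blast
    next
      case False
      then have "fr D = insert (Max D + 1) (D - {Min D, Max D + 1 - Min D})" using fr_A[OF fin ne z c1] by blast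
      then have "M + 1 \<in> D" using fx unfolding M_def by auto
      then show ?thesis using lowD by fastforce
    qed
  next
    case c1: False
    show ?thesis
    proof (cases "Max D + 2 = 2 * runb D")
      case c2: True
      have "b = sm" using c1 c2 rp(3) unfolding b_def sm_def M_def by simp
      have D1: "D = {b..M}" using rp(2) lowD \<open>b = sm\<close> by auto
      have bb: "b \<ge> 1" using rp by simp
      have "{b..M} = {b..<b+(b-1)}" using c2 bb unfolding M_def b_def by auto
      then have DI: "D = {b..<b+(b-1)}" using D1 by simp
      define k where "k = b - 1"
      have DI': "D = {k+1..<(k+1)+k}" using DI bb unfolding k_def by simp
      have "2 * sum id D + k = k * (2 * (k+1) + k)" using sum_interval2[of "k+1" k] DI' by simp
      then have "int (2 * sum id D + k) = int (k * (2 * (k+1) + k))" by (rule arg_cong)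
      then have h: "2 * int (sum id D) + int k = int k * (2 * (int k + 1) + int k)" by (simp only: of_nat_add of_nat_mult of_nat_numeral of_nat_1)
      have e1: "(6 * int k + 1)^2 = 36 * (int k * int k) + 12 * int k + 1" by (simp add: power2_eq_square algebra_simps)
      have e2: "int k * (2 * (int k + 1) + int k) = 3 * (int k * int k) + 2 * int k" by (simp add: algebra_simps)
      have "24 * int (sum id D) + 1 = (6 * int k + 1)^2" using h e1 e2 by linarith
      then show ?thesis by blast
    next
      case False
      then have "fr D = insert (Max D + 1 - runb D) (insert (runb D - 1) (D - {Max D}))" using fr_B[OF fin ne z c1] by blast
      moreover have "Max D + 1 - runb D \<noteq> Max D" "runb D - 1 \<noteq> Max D" using rp c1 unfolding b_def M_def sm_def by auto
      ultimately have "M \<notin> fr D" unfolding M_def by auto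
      then show ?thesis using fx MD by simp
    qed
  qed
qed

lemma sum_split:
  fixes n A :: nat and h :: "nat \<Rightarrow> nat"
  assumes "D \<subseteq> {1..n}"
  shows "(\<Sum>i\<in>{1..n}. i * (h i + (if i \<in> D then A else 0))) = (\<Sum>i\<in>{1..n}. i * h i) + A * sum id D"
proof -
  have "(\<Sum>i\<in>{1..n}. i * (h i + (if i \<in> D then A else 0)))
      = (\<Sum>i\<in>{1..n}. i * h i + (if i \<in> D then i * A else 0))"
    by (rule sum.cong) (simp_all add: distrib_left)
  also have "\<dots> = (\<Sum>i\<in>{1..n}. i * h i) + (\<Sum>i\<in>{1..n}. if i \<in> D then i * A else 0)"
    by (rule sum.distrib)
  also have "(\<Sum>i\<in>{1..n}. if i \<in> D then i * A else 0) = (\<Sum>i\<in>{x\<in>{1..n}. x \<in> D}. i * A)"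
    by (rule sum.inter_filter[symmetric]) simp
  also have "{x\<in>{1..n}. x \<in> D} = D" using assms by auto
  also have "(\<Sum>i\<in>D. i * A) = A * sum id D" by (simp add: sum_distrib_left mult.commute)
  finally show ?thesis .
qed

lemma key:
  fixes p r a m n :: nat
  assumes pr: "prime p" and cop: "coprime a p" and a0: "a > 0" and m1: "m \<ge> 1"
    and odd: "odd (b2 p r a m n)"
  shows "\<exists>s::nat. \<exists>y::int. [int n = int (p*r+a) * int s] (mod int p) \<and> 24 * int s + 1 = y^2"
proof -
  define A where "A = p * r + a"
  define X where "X = {f \<in> partitions_mult n. \<forall>i \<in> {1..n}. f i > 0 \<longrightarrow> f i \<in> allowed_mult p r a m}"
  define Df where "Df f = {i\<in>{1..n}. \<not> p dvd f i}" for f :: "nat \<Rightarrow> nat"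
  define hf where "hf f i = f i - (if i \<in> Df f then A else 0)" for f :: "nat \<Rightarrow> nat" and i
  define g where "g f i = hf f i + (if i \<in> fr (Df f) then A else 0)" for f :: "nat \<Rightarrow> nat" and i
  have A1: "A \<ge> 1" using a0 unfolding A_def by simp
  have pA: "\<not> p dvd A"
  proof
    assume "p dvd A"
    then have "p dvd a" unfolding A_def by (simp add: dvd_add_right_iff)
    then have "is_unit p" using cop by (meson coprime_common_divisor dvd_refl)
    then show False using pr by simp
  qed
  have cX: "card X = b2 p r a m n" unfolding X_def b2_def ..
  have DfS: "Df f \<subseteq> {1..n}" for f unfolding Df_def by auto
  have dec: "\<exists>k<m. hf f i = p * k" and geA: "i \<in> Df f \<Longrightarrow> f i \<ge> A"
    if fX: "f \<in> X" for f i
  proof -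
    have "\<exists>j\<in>{0,1}. \<exists>k<m. f i = j * A + p * k"
    proof (cases "i \<in> {1..n} \<and> f i > 0")
      case True
      then have "f i \<in> allowed_mult p r a m" using fX unfolding X_def by auto
      then show ?thesis unfolding allowed_mult_def A_def by auto
    next
      case False
      then have "f i = 0" using fX unfolding X_def partitions_mult_def
        by (cases "i = 0") (auto simp: not_le)
      then show ?thesis using m1 by (intro bexI[of _ 0] exI[of _ 0]) auto
    qed
    then obtain j k where jk: "j \<in> {0,1}" "k < m" "f i = j * A + p * k" by blast
    have iff: "p dvd f i \<longleftrightarrow> j = 0" using jk pA by (auto simp: dvd_add_left_iff)
    have "hf f i = p * k"
    proof (cases "i \<in> Df f")
      case True
      then have "j = 1" using iff jk unfolding Df_def by auto
      then show ?thesis using True jk unfolding hf_def by simp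
    next
      case False
      then have "j = 0 \<or> i \<notin> {1..n}" using iff jk unfolding Df_def by auto
      moreover have "i \<notin> {1..n} \<Longrightarrow> f i = 0" using fX unfolding X_def partitions_mult_def
        by (cases "i = 0") (auto simp: not_le)
      ultimately show ?thesis using False jk unfolding hf_def by auto
    qed
    then show "\<exists>k<m. hf f i = p * k" using jk by blast
    show "f i \<ge> A" if "i \<in> Df f"
    proof -
      have "j = 1" using iff jk that unfolding Df_def by auto
      then show ?thesis using jk by simp
    qed
  qed
  have fdec: "f i = hf f i + (if i \<in> Df f then A else 0)" if "f \<in> X" for f i
    using geA[OF that, of i] unfolding hf_def by auto
  have hz: "hf f i = 0" if "f \<in> X" "i \<notin> {1..n}" for f i
  proof -
    have "f i = 0" using that unfolding X_def partitions_mult_def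
      by (cases "i = 0") (auto simp: not_le)
    then show ?thesis unfolding hf_def by simp
  qed
  have nsum: "n = (\<Sum>i\<in>{1..n}. i * hf f i) + A * sum id (Df f)" if "f \<in> X" for f
  proof -
    have "n = (\<Sum>i\<in>{1..n}. i * f i)" using that unfolding X_def partitions_mult_def by simp
    also have "\<dots> = (\<Sum>i\<in>{1..n}. i * (hf f i + (if i \<in> Df f then A else 0)))"
      using fdec[OF that] by simp
    also have "\<dots> = (\<Sum>i\<in>{1..n}. i * hf f i) + A * sum id (Df f)" by (rule sum_split[OF DfS])
    finally show ?thesis .
  qed
  have frp: "finite (fr (Df f)) \<and> 0 \<notin> fr (Df f) \<and> sum id (fr (Df f)) = sum id (Df f) \<and> fr (fr (Df f)) = Df f" for f
  proof (rule fr_props)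
    show "finite (Df f)" using DfS[of f] by (meson finite_subset finite_atLeastAtMost)
    show "0 \<notin> Df f" using DfS[of f] by auto
  qed
  have frS: "fr (Df f) \<subseteq> {1..n}" if "f \<in> X" for f
  proof
    fix e assume e: "e \<in> fr (Df f)"
    have "e \<le> sum id (fr (Df f))" using member_le_sum[of e "fr (Df f)" id] e frp[of f] by simp
    also have "\<dots> = sum id (Df f)" using frp[of f] by simp
    also have "\<dots> \<le> A * sum id (Df f)" using A1 by simp
    also have "\<dots> \<le> n" using nsum[OF that] by linarith
    finally show "e \<in> {1..n}" using e frp[of f] by (cases e) auto
  qed
  have gX: "g f \<in> X" and Dg: "Df (g f) = fr (Df f)" and hg: "hf (g f) = hf f" if fX: "f \<in> X" for f
  proof -
    have pdvd: "p dvd hf f i" for i using dec[OF fX, of i] by auto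
    show Dg: "Df (g f) = fr (Df f)"
    proof -
      have "(\<not> p dvd g f i) \<longleftrightarrow> i \<in> fr (Df f)" for i
        using pdvd[of i] pA unfolding g_def by (auto simp: dvd_add_right_iff)
      then have "Df (g f) = {i\<in>{1..n}. i \<in> fr (Df f)}" unfolding Df_def[of "g f"] by auto
      also have "\<dots> = fr (Df f)" using frS[OF fX] by auto
      finally show ?thesis .
    qed
    show hg: "hf (g f) = hf f"
      by (rule ext) (simp add: hf_def[of "g f"] Dg g_def)
    show "g f \<in> X"
      unfolding X_def partitions_mult_def
    proof (intro CollectI conjI ballI allI impI)
      show "g f 0 = 0" using hz[OF fX, of 0] frS[OF fX] unfolding g_def by auto
      show "g f i = 0" if "i > n" for i using hz[OF fX, of i] frS[OF fX] that unfolding g_def by auto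
      have "(\<Sum>i\<in>{1..n}. i * g f i) = (\<Sum>i\<in>{1..n}. i * hf f i) + A * sum id (fr (Df f))"
        unfolding g_def by (rule sum_split[OF frS[OF fX]])
      also have "\<dots> = n" using nsum[OF fX] frp[of f] by simp
      finally show "(\<Sum>i\<in>{1..n}. i * g f i) = n" .
      fix i assume "i \<in> {1..n}" "0 < g f i"
      obtain k where k: "k < m" "hf f i = p * k" using dec[OF fX, of i] by blast
      show "g f i \<in> allowed_mult p r a m"
      proof (cases "i \<in> fr (Df f)")
        case True
        then have "g f i = 1 * (p * r + a) + p * k" using k unfolding g_def A_def by simp
        then show ?thesis unfolding allowed_mult_def using k by blast
      next
        case False
        then have "g f i = 0 * (p * r + a) + p * k" using k unfolding g_def A_def by simp
        then show ?thesis unfolding allowed_mult_def using k by blast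
      qed
    qed
  qed
  have gg: "g (g f) = f" if fX: "f \<in> X" for f
  proof (rule ext)
    fix i
    have "g (g f) i = hf f i + (if i \<in> Df f then A else 0)"
      unfolding g_def[of "g f"] hg[OF fX] Dg[OF fX] using frp[of f] by simp
    then show "g (g f) i = f i" using fdec[OF fX] by simp
  qed
  have fin: "finite X"
  proof (rule ccontr)
    assume "infinite X"
    then have "card X = 0" by simp
    then show False using odd cX by simp
  qed
  have "\<not> (\<forall>f\<in>X. g f \<noteq> f)"
  proof
    assume "\<forall>f\<in>X. g f \<noteq> f"
    then have "even (card X)" using invol_even[OF fin] gX gg by blast
    then show False using odd cX by simp
  qed
  then obtain f where fX: "f \<in> X" and fxd: "g f = f" by blast
  have "fr (Df f) = Df f" using Dg[OF fX] fxd by simp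
  then obtain y :: int where y: "24 * int (sum id (Df f)) + 1 = y^2"
    using fr_fix[of "Df f"] DfS[of f] by (meson atLeastAtMost_iff finite_atLeastAtMost finite_subset not_one_le_zero subsetD)
  have "p dvd (\<Sum>i\<in>{1..n}. i * hf f i)"
  proof (rule dvd_sum)
    fix i
    obtain k where "hf f i = p * k" using dec[OF fX, of i] by blast
    then show "p dvd i * hf f i" by simp
  qed
  then obtain c where c: "(\<Sum>i\<in>{1..n}. i * hf f i) = p * c" by blast
  have "int n = int p * int c + int A * int (sum id (Df f))" using nsum[OF fX] c by simp
  then have "[int n = int A * int (sum id (Df f))] (mod int p)"
    by (simp add: cong_iff_dvd_diff)
  then show ?thesis using y unfolding A_def by blast
qed

theorem theorem4p2:
  fixes p a r m :: nat and t ainv :: int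
  assumes "prime p" and "p > 3"
    and "a > 0" and "coprime a p"
    and "m \<ge> 1"
    and "[int a * ainv = 1] (mod int p)"
    and "\<not> QuadRes (int p) (24 * t * ainv + 1)"
  shows "\<forall>n::nat. int p * int n + t \<ge> 0 \<longrightarrow> even (b2 p r a m (nat (int p * int n + t)))"
proof (intro allI impI)
  fix n0 :: nat
  assume h: "int p * int n0 + t \<ge> 0"
  define n where "n = nat (int p * int n0 + t)"
  have nn: "int n = int p * int n0 + t" using h unfolding n_def by simp
  show "even (b2 p r a m (nat (int p * int n0 + t)))"
  proof (rule ccontr)
    assume "odd (b2 p r a m (nat (int p * int n0 + t)))"
    then have "odd (b2 p r a m n)" unfolding n_def .
    from key[OF assms(1) assms(4) assms(3) assms(5) this] obtain s :: nat and y :: int where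
      c: "[int n = int (p*r+a) * int s] (mod int p)" and y: "24 * int s + 1 = y^2" by blast
    have d1: "int p dvd (int n - int (p*r+a) * int s)" using c by (simp add: cong_iff_dvd_diff)
    have "t - int a * int s = (int n - int (p*r+a) * int s) - int p * (int n0 - int r * int s)"
      using nn by (simp add: algebra_simps)
    then have d2: "int p dvd (t - int a * int s)" using d1 by (metis dvd_diff dvd_triv_left)
    have d3: "int p dvd (int a * ainv - 1)" using assms(6) by (simp add: cong_iff_dvd_diff)
    have "y^2 - (24 * t * ainv + 1) = - (24 * int s) * (int a * ainv - 1) - (24 * ainv) * (t - int a * int s)"
      using y by (simp add: algebra_simps)
    then have "int p dvd (y^2 - (24 * t * ainv + 1))" using d2 d3
      by (metis dvd_diff dvd_mult dvd_mult2 mult.commute)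
    then have "[y^2 = 24 * t * ainv + 1] (mod int p)" by (simp add: cong_iff_dvd_diff)
    then have "QuadRes (int p) (24 * t * ainv + 1)" unfolding QuadRes_def by blast
    then show False using assms(7) by simp
  qed
qed

end
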